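(* Let $k\ge 1$ and $\ell$ be integers with $0\le\ell\le 2k-1$, and fix a vertex set of size $n$. Let $\mathcal{N}_{k,\ell}$ be the family of multigraphs $G$ on these $n$ vertices (subgraphs of $K_n^{k,2k}$) such that $G$ has $m=kn-\ell$ edges and $G$ is $(k,0)$-sparse. Then $\mathcal{N}_{k,\ell}$ (viewed as a family of edge sets) is the class of bases of a matroid that is a truncation of the $k$-fold union of the bicycle matroid.
   Context: Graphs are multigraphs, possibly with loops. A graph is $(k,0)$-sparse if no subset $V'$ of $n'$ vertices spans more than $kn'$ edges. $K_n^{k,2k}$ is the multigraph on $n$ vertices with $k$ loops at each vertex and $2k$ parallel edges between each pair of distinct vertices; the matroids are on its edge set. The bicycle matroid has as independent sets the edge sets in which each connected component contains at most one cycle (pseudoforests; a loop counts as a cycle); its bases on a vertex set are the spanning maps, i.e. graphs admitting an orientation in which every vertex has out-degree exactly $1$. The $k$-fold union of a matroid $\mathcal{M}$ has as independent sets the unions of $k$ independent sets of $\mathcal{M}$. The truncation of a matroid $\mathcal{M}=(E,\mathcal{I})$ at a nonnegative integer $r$ is the matroid $(E,\{E'\in\mathcal{I}:|E'|\le r\})$. *)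

theory Defs
  imports Main
begin

(* Edges of K_n^{k,2k}: a labelled edge (u, v, i) with endpoints u, v.
   Vertices are {0..<n}.  Loops: (v, v, i) with i < k.
   Non-loops: (u, v, i) with u < v and i < 2k. *)
type_synonym edge = "nat \<times> nat \<times> nat"

definition ends :: "edge \<Rightarrow> nat set" where
  "ends e = {fst e, fst (snd e)}"

definition is_loop :: "edge \<Rightarrow> bool" where
  "is_loop e \<longleftrightarrow> fst e = fst (snd e)"

definition Kgraph :: "nat \<Rightarrow> nat \<Rightarrow> edge set" where
  "Kgraph n k =
     {(v, v, i) | v i. v < n \<and> i < k} \<union> {(u, v, i) | u v i. u < v \<and> v < n \<and> i < 2 * k}"

definition verts :: "edge set \<Rightarrow> nat set" where
  "verts F = (\<Union>e\<in>F. ends e)"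

definition reach :: "edge set \<Rightarrow> nat \<Rightarrow> nat \<Rightarrow> bool" where
  "reach F x y \<longleftrightarrow> (x, y) \<in> {(a, b). \<exists>e\<in>F. ends e = {a, b}}\<^sup>*"

definition deg :: "edge set \<Rightarrow> nat \<Rightarrow> nat" where
  "deg F x = card {e\<in>F. x \<in> ends e \<and> \<not> is_loop e} + 2 * card {e\<in>F. ends e = {x}}"

(* a cycle: nonempty finite connected edge set in which every vertex has degree 2
   (a single loop and a pair of parallel edges are cycles) *)
definition is_cycle :: "edge set \<Rightarrow> bool" where
  "is_cycle C \<longleftrightarrow> C \<noteq> {} \<and> finite C \<and>
     (\<forall>x\<in>verts C. \<forall>y\<in>verts C. reach C x y) \<and>
     (\<forall>x\<in>verts C. deg C x = 2)"

(* bicycle matroid on K_n^{k,2k}: every connected component contains at most one cycle,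
   i.e. two distinct cycles of F never lie in the same component of F *)
definition bicycle_indep :: "nat \<Rightarrow> nat \<Rightarrow> edge set \<Rightarrow> bool" where
  "bicycle_indep n k F \<longleftrightarrow> F \<subseteq> Kgraph n k \<and>
     (\<forall>C1 C2. C1 \<subseteq> F \<longrightarrow> C2 \<subseteq> F \<longrightarrow> is_cycle C1 \<longrightarrow> is_cycle C2 \<longrightarrow> C1 \<noteq> C2 \<longrightarrow>
        \<not> (\<exists>x\<in>verts C1. \<exists>y\<in>verts C2. reach F x y))"

definition union_indep :: "nat \<Rightarrow> (edge set \<Rightarrow> bool) \<Rightarrow> edge set \<Rightarrow> bool" where
  "union_indep k I X \<longleftrightarrow> (\<exists>f. (\<forall>i<k. I (f i)) \<and> X = (\<Union>i<k. f i))"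

definition trunc_indep :: "nat \<Rightarrow> (edge set \<Rightarrow> bool) \<Rightarrow> edge set \<Rightarrow> bool" where
  "trunc_indep r I X \<longleftrightarrow> I X \<and> card X \<le> r"

definition matroid :: "'a set \<Rightarrow> ('a set \<Rightarrow> bool) \<Rightarrow> bool" where
  "matroid E I \<longleftrightarrow> finite E \<and> (\<forall>X. I X \<longrightarrow> X \<subseteq> E) \<and> I {} \<and>
     (\<forall>X Y. I Y \<longrightarrow> X \<subseteq> Y \<longrightarrow> I X) \<and>
     (\<forall>X Y. I X \<longrightarrow> I Y \<longrightarrow> card X < card Y \<longrightarrow> (\<exists>e\<in>Y - X. I (insert e X)))"

definition bases :: "('a set \<Rightarrow> bool) \<Rightarrow> 'a set set" where
  "bases I = {B. I B \<and> (\<forall>B'. I B' \<longrightarrow> B \<subseteq> B' \<longrightarrow> B' = B)}"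

definition sparse :: "nat \<Rightarrow> nat \<Rightarrow> edge set \<Rightarrow> bool" where
  "sparse n k G \<longleftrightarrow> (\<forall>V' \<subseteq> {0..<n}. card {e\<in>G. ends e \<subseteq> V'} \<le> k * card V')"

definition Nfam :: "nat \<Rightarrow> nat \<Rightarrow> nat \<Rightarrow> edge set set" where
  "Nfam n k l = {G. G \<subseteq> Kgraph n k \<and> int (card G) = int k * int n - int l \<and> sparse n k G}"

end

theory Submission
  imports Defs
begin

definition E :: "edge set \<Rightarrow> (nat \<times> nat) set" where
  "E F = {(a, b). \<exists>e\<in>F. ends e = {a, b}}"

definition ind :: "edge set \<Rightarrow> nat set \<Rightarrow> edge set" where
  "ind Y V = {e\<in>Y. ends e \<subseteq> V}"

lemma reach_E: "reach F x y \<longleftrightarrow> (x, y) \<in> (E F)\<^sup>*"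
  by (simp add: reach_def E_def)

lemma E_sym: "(a,b) \<in> E F \<Longrightarrow> (b,a) \<in> E F"
  by (auto simp: E_def insert_commute)

lemma reach_refl: "reach F x x" by (simp add: reach_E)
lemma reach_trans: "reach F x y \<Longrightarrow> reach F y z \<Longrightarrow> reach F x z" by (simp add: reach_E)
lemma reach_sym: "reach F x y \<Longrightarrow> reach F y x"
  unfolding reach_E
proof (induction rule: rtrancl_induct)
  case base then show ?case by simp
next
  case (step y z)
  then show ?case by (meson E_sym converse_rtrancl_into_rtrancl)
qed

lemma reach_mono: "F \<subseteq> G \<Longrightarrow> reach F x y \<Longrightarrow> reach G x y"
  unfolding reach_E E_def by (erule rtrancl_mono[THEN subsetD, rotated]) blast

lemma ends_cases: "ends e = {fst e, fst (snd e)}" by (simp add: ends_def)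

lemma reach_edge: "e \<in> F \<Longrightarrow> a \<in> ends e \<Longrightarrow> b \<in> ends e \<Longrightarrow> reach F a b"
proof -
  assume h: "e \<in> F" "a \<in> ends e" "b \<in> ends e"
  show ?thesis
  proof (cases "a = b")
    case True then show ?thesis by (simp add: reach_refl)
  next
    case False
    then have "ends e = {a, b}" using h(2,3) by (auto simp: ends_def)
    then have "(a,b) \<in> E F" using h(1) by (auto simp: E_def)
    then show ?thesis by (simp add: reach_E)
  qed
qed

lemma finite_ends: "finite (ends e)" by (simp add: ends_def)

lemma finite_verts: "finite G \<Longrightarrow> finite (verts G)"
  by (simp add: verts_def finite_ends)

lemma reach_cases: "reach F x z \<Longrightarrow> z = x \<or> z \<in> verts F"
  unfolding reach_E
  by (erule rtranclE) (auto simp: E_def verts_def)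

lemma comp_sub: "{z. reach F x z} \<subseteq> insert x (verts F)"
  using reach_cases by blast

lemma finite_comp: "finite F \<Longrightarrow> finite {z. reach F x z}"
  by (meson comp_sub finite_insert finite_subset finite_verts)

lemma comp_closed:
  assumes a: "f \<in> G" "z \<in> ends f" "reach G x z"
  shows "ends f \<subseteq> {w. reach G x w}"
proof
  fix w assume "w \<in> ends f"
  then have "reach G z w" using reach_edge a by metis
  then show "w \<in> {w. reach G x w}" using a reach_trans by blast
qed

lemma finite_Kgraph: "finite (Kgraph n k)"
proof -
  have "Kgraph n k \<subseteq> {..<n} \<times> {..<n} \<times> {..<2*k}"
    by (auto simp: Kgraph_def)
  then show ?thesis by (rule finite_subset) auto
qed

lemma ind_mono_card:
  assumes fY: "finite Y"
  shows "card (ind Y V1) + card (ind Y V2) \<le> card (ind Y (V1 \<union> V2)) + card (ind Y (V1 \<inter> V2))"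
proof -
  have f: "finite (ind Y V)" for V using fY by (simp add: ind_def)
  have 1: "card (ind Y V1) + card (ind Y V2) = card (ind Y V1 \<union> ind Y V2) + card (ind Y V1 \<inter> ind Y V2)"
    by (rule card_Un_Int[OF f f])
  have 2: "ind Y V1 \<inter> ind Y V2 = ind Y (V1 \<inter> V2)" by (auto simp: ind_def)
  have 3: "ind Y V1 \<union> ind Y V2 \<subseteq> ind Y (V1 \<union> V2)" by (auto simp: ind_def)
  have 4: "card (ind Y V1 \<union> ind Y V2) \<le> card (ind Y (V1 \<union> V2))"
    by (rule card_mono[OF f 3])
  from 1 4 show ?thesis unfolding 2 by linarith
qed

lemma orient:
  fixes c :: "nat \<Rightarrow> nat"
  assumes "finite X" "finite W" "\<forall>e\<in>X. ends e \<subseteq> W"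
    "\<forall>V\<subseteq>W. card (ind X V) \<le> sum c V"
  shows "\<exists>h. (\<forall>e\<in>X. h e \<in> ends e) \<and> (\<forall>v\<in>W. card {e\<in>X. h e = v} \<le> c v)"
  using assms
proof (induction X arbitrary: c rule: finite_induct)
  case empty then show ?case by auto
next
  case (insert e0 Y)
  define cnt where "cnt V = card (ind Y V)" for V
  have fW: "finite W" by fact
  have hyp: "cnt V + (if ends e0 \<subseteq> V then 1 else 0) \<le> sum c V" if "V \<subseteq> W" for V
  proof -
    have "card (ind (insert e0 Y) V) = cnt V + (if ends e0 \<subseteq> V then 1 else 0)"
    proof (cases "ends e0 \<subseteq> V")
      case True
      then have "ind (insert e0 Y) V = insert e0 (ind Y V)" by (auto simp: ind_def)
      moreover have "e0 \<notin> ind Y V" using insert.hyps by (simp add: ind_def)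
      ultimately show ?thesis using True insert.hyps by (simp add: cnt_def ind_def)
    next
      case False
      then have "ind (insert e0 Y) V = ind Y V" by (auto simp: ind_def)
      then show ?thesis using False by (simp add: cnt_def)
    qed
    moreover have "card (ind (insert e0 Y) V) \<le> sum c V" using insert.prems(3) that by blast
    ultimately show ?thesis by simp
  qed
  have hyp0: "cnt V \<le> sum c V" if "V \<subseteq> W" for V using hyp[OF that] by simp
  have e0W: "ends e0 \<subseteq> W" using insert.prems by auto
  have key: "\<exists>a\<in>ends e0. \<forall>V\<subseteq>W. cnt V + (if a \<in> V then 1 else 0) \<le> sum c V"
  proof (rule ccontr)
    assume "\<not> ?thesis"
    then have bad0: "\<forall>a\<in>ends e0. \<exists>V\<subseteq>W. \<not> cnt V + (if a \<in> V then 1 else 0) \<le> sum c V"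
      by blast
    have bad: "\<forall>a\<in>ends e0. \<exists>V\<subseteq>W. a \<in> V \<and> sum c V \<le> cnt V"
    proof
      fix a assume "a \<in> ends e0"
      then obtain V where V: "V \<subseteq> W" "\<not> cnt V + (if a \<in> V then 1 else 0) \<le> sum c V"
        using bad0 by blast
      have "a \<in> V" using V hyp0[OF V(1)] by (cases "a \<in> V") auto
      then show "\<exists>V\<subseteq>W. a \<in> V \<and> sum c V \<le> cnt V" using V by (intro exI[of _ V]) auto
    qed
    obtain V1 where V1: "V1 \<subseteq> W" "fst e0 \<in> V1" "sum c V1 \<le> cnt V1"
      using bad by (auto simp: ends_def)
    obtain V2 where V2: "V2 \<subseteq> W" "fst (snd e0) \<in> V2" "sum c V2 \<le> cnt V2"
      using bad by (auto simp: ends_def)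
    have fV: "finite V1" "finite V2" using V1 V2 fW finite_subset by auto
    have sm: "cnt V1 + cnt V2 \<le> cnt (V1 \<union> V2) + cnt (V1 \<inter> V2)"
      unfolding cnt_def by (rule ind_mono_card) (use insert.hyps in simp)
    have "sum c (V1 \<union> V2) + sum c (V1 \<inter> V2) = sum c V1 + sum c V2"
      using fV by (simp add: sum.union_inter)
    moreover have "cnt (V1 \<inter> V2) \<le> sum c (V1 \<inter> V2)" using V1 by (intro hyp0) auto
    moreover have "ends e0 \<subseteq> V1 \<union> V2" using V1 V2 by (auto simp: ends_def)
    moreover have "cnt (V1 \<union> V2) + 1 \<le> sum c (V1 \<union> V2)"
      using hyp[of "V1 \<union> V2"] V1 V2 calculation(3) by auto
    ultimately show False using sm V1 V2 by linarith
  qed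
  then obtain a where a: "a \<in> ends e0" and ha: "\<forall>V\<subseteq>W. cnt V + (if a \<in> V then 1 else 0) \<le> sum c V"
    by blast
  have aW: "a \<in> W" using a e0W by auto
  have ca: "c a \<ge> 1" using ha[rule_format, of "{a}"] aW by simp
  define c' where "c' = c(a := c a - 1)"
  have cond: "\<forall>V\<subseteq>W. card (ind Y V) \<le> sum c' V"
  proof (intro allI impI)
    fix V assume V: "V \<subseteq> W"
    have fV: "finite V" using V fW finite_subset by auto
    show "card (ind Y V) \<le> sum c' V"
    proof (cases "a \<in> V")
      case True
      have "sum c V = c a + sum c (V - {a})" using True fV by (simp add: sum.remove)
      moreover have "sum c' V = c' a + sum c' (V - {a})" using True fV by (simp add: sum.remove)
      moreover have "sum c' (V - {a}) = sum c (V - {a})" by (rule sum.cong) (auto simp: c'_def)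
      ultimately show ?thesis using ha[rule_format, OF V] True ca by (simp add: c'_def cnt_def)
    next
      case False
      have "sum c' V = sum c V" by (rule sum.cong) (use False in \<open>auto simp: c'_def\<close>)
      then show ?thesis using ha[rule_format, OF V] False by (simp add: cnt_def)
    qed
  qed
  have Yw: "\<forall>e\<in>Y. ends e \<subseteq> W" using insert.prems(2) by blast
  obtain h where h: "\<forall>e\<in>Y. h e \<in> ends e" "\<forall>v\<in>W. card {e\<in>Y. h e = v} \<le> c' v"
    using insert.IH[of c', OF insert.prems(1) Yw cond] by blast
  define h' where "h' = h(e0 := a)"
  have "\<forall>e\<in>insert e0 Y. h' e \<in> ends e" using h a by (auto simp: h'_def)
  moreover have "\<forall>v\<in>W. card {e\<in>insert e0 Y. h' e = v} \<le> c v"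
  proof
    fix v assume v: "v \<in> W"
    show "card {e\<in>insert e0 Y. h' e = v} \<le> c v"
    proof (cases "v = a")
      case True
      have "{e\<in>insert e0 Y. h' e = v} = insert e0 {e\<in>Y. h e = v}"
        using True insert.hyps by (auto simp: h'_def)
      moreover have "finite {e\<in>Y. h e = v}" using insert.hyps by simp
      ultimately have "card {e\<in>insert e0 Y. h' e = v} = Suc (card {e\<in>Y. h e = v})"
        using insert.hyps by simp
      then show ?thesis using h(2) v True ca by (auto simp: c'_def)
    next
      case False
      have "{e\<in>insert e0 Y. h' e = v} = {e\<in>Y. h e = v}"
        using False insert.hyps by (auto simp: h'_def)
      then show ?thesis using h(2) v False by (auto simp: c'_def)
    qed
  qed
  ultimately show ?case by blast
qed


definition wt :: "edge \<Rightarrow> nat \<Rightarrow> nat" where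
  "wt e v = (if v \<in> ends e then (if is_loop e then 2 else 1) else 0)"

lemma loop_ends: "is_loop e \<Longrightarrow> ends e = {fst e}"
  by (simp add: is_loop_def ends_def)

lemma ends_single_iff: "ends e = {v} \<longleftrightarrow> v \<in> ends e \<and> is_loop e"
  by (auto simp: is_loop_def ends_def doubleton_eq_iff)

lemma deg_sum:
  assumes "finite G"
  shows "deg G v = (\<Sum>e\<in>G. wt e v)"
proof -
  have 1: "card {e\<in>G. v \<in> ends e \<and> \<not> is_loop e} = (\<Sum>e\<in>G. if v \<in> ends e \<and> \<not> is_loop e then 1 else 0)"
    using assms by (simp add: sum.inter_filter[symmetric])
  have 2: "card {e\<in>G. ends e = {v}} = (\<Sum>e\<in>G. if v \<in> ends e \<and> is_loop e then 1 else 0)"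
    using assms by (simp add: sum.inter_filter[symmetric] ends_single_iff)
  have "deg G v = (\<Sum>e\<in>G. (if v \<in> ends e \<and> \<not> is_loop e then 1 else 0) + 2 * (if v \<in> ends e \<and> is_loop e then 1 else 0))"
    unfolding deg_def 1 2 by (simp add: sum.distrib sum_distrib_left)
  also have "\<dots> = (\<Sum>e\<in>G. wt e v)"
    by (rule sum.cong) (auto simp: wt_def)
  finally show ?thesis .
qed

lemma wt_sum:
  assumes "finite S" "ends e \<subseteq> S"
  shows "(\<Sum>v\<in>S. wt e v) = 2"
proof -
  have "(\<Sum>v\<in>S. wt e v) = (\<Sum>v\<in>ends e. wt e v)"
    by (rule sum.mono_neutral_right[OF assms(1) assms(2)]) (auto simp: wt_def)
  also have "\<dots> = 2"
  proof (cases "is_loop e")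
    case True then show ?thesis by (simp add: loop_ends wt_def)
  next
    case False
    then have "fst e \<noteq> fst (snd e)" by (simp add: is_loop_def)
    then show ?thesis using False by (simp add: ends_def wt_def)
  qed
  finally show ?thesis .
qed

lemma handshake:
  assumes "finite G" "finite S" "verts G \<subseteq> S"
  shows "(\<Sum>v\<in>S. deg G v) = 2 * card G"
proof -
  have "(\<Sum>v\<in>S. deg G v) = (\<Sum>v\<in>S. \<Sum>e\<in>G. wt e v)"
    using assms(1) by (simp add: deg_sum)
  also have "\<dots> = (\<Sum>e\<in>G. \<Sum>v\<in>S. wt e v)" by (rule sum.swap)
  also have "\<dots> = (\<Sum>e\<in>G. 2)"
    by (rule sum.cong) (use assms in \<open>auto intro!: wt_sum simp: verts_def\<close>)
  finally show ?thesis by simp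
qed

lemma deg_remove:
  assumes "finite G" "e \<in> G"
  shows "deg G v = deg (G - {e}) v + wt e v"
  using assms by (simp add: deg_sum sum.remove)


lemma cycle_props:
  assumes "is_cycle C"
  shows "C \<noteq> {}" "finite C" "\<And>x y. x \<in> verts C \<Longrightarrow> y \<in> verts C \<Longrightarrow> reach C x y"
    "\<And>x. x \<in> verts C \<Longrightarrow> deg C x = 2"
  using assms by (auto simp: is_cycle_def)

lemma deg_restrict:
  assumes "finite G" "\<forall>f\<in>G. v \<in> ends f \<longrightarrow> ends f \<subseteq> S"
  shows "deg G v = deg (ind G S) v"
proof -
  have fi: "finite (ind G S)" using assms(1) by (simp add: ind_def)
  have "deg (ind G S) v = (\<Sum>f\<in>ind G S. wt f v)" using fi by (rule deg_sum)
  also have "\<dots> = (\<Sum>f\<in>G. wt f v)"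
    by (rule sum.mono_neutral_left[OF assms(1)]) (use assms(2) in \<open>auto simp: ind_def wt_def\<close>)
  finally show ?thesis using deg_sum[OF assms(1)] by simp
qed

lemma cycle_del_conn:
  assumes C: "is_cycle C" and e: "e \<in> C" and p: "p \<in> verts C" and q: "q \<in> verts C"
  shows "reach (C - {e}) p q"
proof -
  note cp = cycle_props[OF C]
  define S where "S = {z. reach (C - {e}) p z}"
  have fC: "finite C" by (rule cp(2))
  have fC': "finite (C - {e})" using fC by simp
  have Ssub: "S \<subseteq> verts C"
  proof -
    have "S \<subseteq> insert p (verts (C - {e}))" unfolding S_def by (rule comp_sub)
    also have "\<dots> \<subseteq> verts C" using p by (auto simp: verts_def)
    finally show ?thesis .
  qed
  have fS: "finite S" using Ssub finite_verts[OF fC] finite_subset by blast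
  have pS: "p \<in> S" by (simp add: S_def reach_refl)
  have cl0: "ends f \<subseteq> S" if "f \<in> C - {e}" "z \<in> ends f" "z \<in> S" for f z
    using comp_closed[OF that(1,2)] that(3) by (simp add: S_def)
  have cle: "ends e \<subseteq> S" if "z \<in> ends e" "z \<in> S" for z
  proof (rule ccontr)
    assume ncl: "\<not> ends e \<subseteq> S"
    then obtain z' where z': "z' \<in> ends e" "z' \<notin> S" by blast
    have zz: "z \<noteq> z'" using that z' by auto
    have ee: "ends e = {z, z'}" using that(1) z'(1) zz by (auto simp: ends_def)
    have nl: "\<not> is_loop e" proof
      assume "is_loop e"
      then have "ends e = {fst e}" by (rule loop_ends)
      then show False using ee zz by auto
    qed
    define G' where "G' = ind (C - {e}) S"
    have fG': "finite G'" using fC' by (simp add: G'_def ind_def)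
    have vG': "verts G' \<subseteq> S" by (auto simp: G'_def ind_def verts_def)
    have d1: "deg (C - {e}) v = deg G' v" if "v \<in> S" for v
      unfolding G'_def by (rule deg_restrict[OF fC']) (use cl0 that in blast)
    have "(\<Sum>v\<in>S. deg C v) = (\<Sum>v\<in>S. 2)"
      by (rule sum.cong) (use Ssub cp(4) in auto)
    also have "\<dots> = 2 * card S" by simp
    finally have s1: "(\<Sum>v\<in>S. deg C v) = 2 * card S" .
    have "(\<Sum>v\<in>S. deg C v) = (\<Sum>v\<in>S. deg (C - {e}) v + wt e v)"
      by (rule sum.cong) (use deg_remove[OF fC e] in auto)
    also have "\<dots> = (\<Sum>v\<in>S. deg G' v) + (\<Sum>v\<in>S. wt e v)"
      by (simp add: sum.distrib d1)
    also have "(\<Sum>v\<in>S. deg G' v) = 2 * card G'" by (rule handshake[OF fG' fS vG'])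
    also have "(\<Sum>v\<in>S. wt e v) = (\<Sum>v\<in>{z}. wt e v)"
      by (rule sum.mono_neutral_right[OF fS]) (use that z' ee in \<open>auto simp: wt_def\<close>)
    also have "\<dots> = 1" using nl ee by (simp add: wt_def)
    finally have "2 * card S = 2 * card G' + 1" using s1 by simp
    then show False by presburger
  qed
  have closed: "ends f \<subseteq> S" if "f \<in> C" "z \<in> ends f" "z \<in> S" for f z
    using cl0 cle that by (cases "f = e") auto
  have "reach C p q" by (rule cp(3)[OF p q])
  then have "(p, q) \<in> (E C)\<^sup>*" by (simp add: reach_E)
  then have "q \<in> S"
  proof (induction rule: rtrancl_induct)
    case base then show ?case by (rule pS)
  next
    case (step y z)
    then obtain f where "f \<in> C" "ends f = {y, z}" by (auto simp: E_def)
    then show ?case using closed[of f y] step.IH by auto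
  qed
  then show ?thesis by (simp add: S_def)
qed

lemma reach_del:
  assumes C: "is_cycle C" "C \<subseteq> G" and e: "e \<in> C" and r: "reach G x y"
  shows "reach (G - {e}) x y"
proof -
  have "(x, y) \<in> (E G)\<^sup>*" using r by (simp add: reach_E)
  then show ?thesis
  proof (induction rule: rtrancl_induct)
    case base then show ?case by (rule reach_refl)
  next
    case (step y z)
    then obtain f where f: "f \<in> G" "ends f = {y, z}" by (auto simp: E_def)
    have "reach (G - {e}) y z"
    proof (cases "f = e")
      case True
      have "y \<in> verts C" "z \<in> verts C" using f True e by (auto simp: verts_def)
      then have "reach (C - {e}) y z" by (rule cycle_del_conn[OF C(1) e])
      then show ?thesis by (rule reach_mono[rotated]) (use C in auto)
    next
      case False
      then show ?thesis using f by (intro reach_edge[of f]) auto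
    qed
    then show ?case using step.IH reach_trans by blast
  qed
qed


lemma comp_count:
  assumes fG: "finite G"
  shows "card {z. reach G x z} \<le> card (ind G {z. reach G x z}) + 1"
proof -
  define K where "K = {z. reach G x z}"
  define R where "R = E G"
  define d where "d z = (LEAST m. (x, z) \<in> R ^^ m)" for z
  define P where "P z e \<longleftrightarrow> e \<in> G \<and> (\<exists>w. ends e = {w, z} \<and> d w < d z \<and> w \<in> K)" for z e
  have ex: "\<exists>e. P z e" if z: "z \<in> K - {x}" for z
  proof -
    have "(x, z) \<in> R\<^sup>*" using z by (simp add: K_def R_def reach_E)
    then obtain m0 where "(x, z) \<in> R ^^ m0" using rtrancl_power by blast
    then have dz: "(x, z) \<in> R ^^ d z" unfolding d_def by (rule LeastI)
    have "d z \<noteq> 0"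
    proof
      assume "d z = 0"
      then show False using dz z by simp
    qed
    then obtain m where m: "d z = Suc m" by (cases "d z") auto
    obtain w where w: "(x, w) \<in> R ^^ m" "(w, z) \<in> R" using dz unfolding m by (rule relpow_Suc_E) blast
    have "d w \<le> m" unfolding d_def by (rule Least_le) (rule w(1))
    then have dw: "d w < d z" using m by simp
    have wK: "w \<in> K" using w(1) relpow_imp_rtrancl by (auto simp: K_def R_def reach_E)
    obtain f where "f \<in> G" "ends f = {w, z}" using w(2) by (auto simp: R_def E_def)
    then have "P z f" using dw wK by (auto simp: P_def)
    then show ?thesis by blast
  qed
  define par where "par z = (SOME e. P z e)" for z
  have par: "P z (par z)" if "z \<in> K - {x}" for z
    unfolding par_def by (rule someI_ex) (rule ex[OF that])
  have inj: "inj_on par (K - {x})"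
  proof (rule inj_onI)
    fix z1 z2 assume z1: "z1 \<in> K - {x}" and z2: "z2 \<in> K - {x}" and eq: "par z1 = par z2"
    obtain w1 where w1: "ends (par z1) = {w1, z1}" "d w1 < d z1" using par[OF z1] by (auto simp: P_def)
    obtain w2 where w2: "ends (par z2) = {w2, z2}" "d w2 < d z2" using par[OF z2] by (auto simp: P_def)
    show "z1 = z2"
    proof (rule ccontr)
      assume ne: "z1 \<noteq> z2"
      have "{w1, z1} = {w2, z2}" using w1 w2 eq by simp
      then have "z1 = w2 \<and> z2 = w1" using ne by (auto simp: doubleton_eq_iff)
      then show False using w1 w2 by simp
    qed
  qed
  have img: "par ` (K - {x}) \<subseteq> ind G K"
  proof
    fix f assume "f \<in> par ` (K - {x})"
    then obtain z where z: "z \<in> K - {x}" "f = par z" by blast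
    obtain w where "f \<in> G" "ends f = {w, z}" "w \<in> K" using par[OF z(1)] z(2) by (auto simp: P_def)
    then show "f \<in> ind G K" using z by (auto simp: ind_def)
  qed
  have fi: "finite (ind G K)" using fG by (simp add: ind_def)
  have c1: "card (K - {x}) \<le> card (ind G K)" by (rule card_inj_on_le[OF inj img fi])
  have fK: "finite K" unfolding K_def by (rule finite_comp[OF fG])
  have "x \<in> K" by (simp add: K_def reach_refl)
  then have "card K = Suc (card (K - {x}))" using fK
    by (simp add: card_Suc_Diff1 del: card_Diff_insert)
  then show ?thesis using c1 by (simp add: K_def)
qed


lemma B_core:
  assumes fF: "finite F" and h: "\<forall>e\<in>F. h e \<in> ends e" and inj: "inj_on h F"
    and C1: "is_cycle C1" "C1 \<subseteq> F" and C2: "is_cycle C2" "C2 \<subseteq> F"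
    and e1: "e1 \<in> C1" "e1 \<notin> C2"
    and V1: "verts C1 \<subseteq> {z. reach F x z}" and V2: "verts C2 \<subseteq> {z. reach F x z}"
  shows False
proof -
  define K where "K = {z. reach F x z}"
  obtain e2 where e2: "e2 \<in> C2" using cycle_props(1)[OF C2(1)] by blast
  have ne: "e1 \<noteq> e2" using e1 e2 by auto
  define HK where "HK = ind F K"
  have fK: "finite K" unfolding K_def by (rule finite_comp[OF fF])
  have "h ` HK \<subseteq> K" using h by (auto simp: HK_def ind_def)
  moreover have "inj_on h HK" using inj by (rule inj_on_subset) (auto simp: HK_def ind_def)
  ultimately have c1: "card HK \<le> card K" using fK by (simp add: card_inj_on_le)
  define F' where "F' = F - {e1} - {e2}"
  have KK: "{z. reach F' x z} = K"
  proof
    show "{z. reach F' x z} \<subseteq> K" unfolding K_def by (auto intro: reach_mono[rotated] simp: F'_def)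
  next
    show "K \<subseteq> {z. reach F' x z}"
    proof
      fix z assume "z \<in> K"
      then have "reach F x z" by (simp add: K_def)
      then have "reach (F - {e1}) x z" by (rule reach_del[OF C1 e1(1)])
      moreover have "C2 \<subseteq> F - {e1}" using C2 e1 by auto
      ultimately have "reach (F - {e1} - {e2}) x z" using reach_del[OF C2(1) _ e2] by blast
      then show "z \<in> {z. reach F' x z}" by (simp add: F'_def)
    qed
  qed
  have fF': "finite F'" using fF by (simp add: F'_def)
  have c2: "card K \<le> card (ind F' K) + 1" using comp_count[OF fF', of x] unfolding KK .
  have "ind F' K = HK - {e1} - {e2}" by (auto simp: F'_def HK_def ind_def)
  moreover have "e1 \<in> HK" using e1 C1 V1 by (auto simp: HK_def ind_def K_def verts_def)
  moreover have "e2 \<in> HK" using e2 C2 V2 by (auto simp: HK_def ind_def K_def verts_def)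
  moreover have "finite HK" using fF by (simp add: HK_def ind_def)
  moreover have "card {e1, e2} \<le> card HK" using calculation by (intro card_mono) auto
  ultimately have c3: "card (ind F' K) + 2 = card HK" using ne
    by (simp add: card_Diff_singleton_if)
  have "x \<in> K" by (simp add: K_def reach_refl)
  then have "card K \<ge> 1" using fK by (metis One_nat_def Suc_leI card_gt_0_iff empty_iff)
  then show False using c1 c2 c3 by linarith
qed

lemma inj_bicycle:
  assumes sub: "F \<subseteq> Kgraph n k" and h: "\<forall>e\<in>F. h e \<in> ends e" and inj: "inj_on h F"
  shows "bicycle_indep n k F"
  unfolding bicycle_indep_def
proof (intro conjI allI impI notI sub)
  have fF: "finite F" using sub finite_Kgraph finite_subset by blast
  fix C1 C2
  assume s1: "C1 \<subseteq> F" and s2: "C2 \<subseteq> F" and c1: "is_cycle C1" and c2: "is_cycle C2"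
    and ne: "C1 \<noteq> C2" and ex: "\<exists>x\<in>verts C1. \<exists>y\<in>verts C2. reach F x y"
  then obtain x y where xy: "x \<in> verts C1" "y \<in> verts C2" "reach F x y" by blast
  have V1: "verts C1 \<subseteq> {z. reach F x z}"
    using cycle_props(3)[OF c1 xy(1)] reach_mono[OF s1] by blast
  have V2: "verts C2 \<subseteq> {z. reach F x z}"
    using cycle_props(3)[OF c2 xy(2)] reach_mono[OF s2] reach_trans xy(3) by blast
  from ne have "(\<exists>e1. e1 \<in> C1 \<and> e1 \<notin> C2) \<or> (\<exists>e1. e1 \<in> C2 \<and> e1 \<notin> C1)" by blast
  then show False
  proof
    assume "\<exists>e1. e1 \<in> C1 \<and> e1 \<notin> C2"
    then obtain e1 where "e1 \<in> C1" "e1 \<notin> C2" by blast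
    then show False using B_core[OF fF h inj c1 s1 c2 s2 _ _ V1 V2] by blast
  next
    assume "\<exists>e1. e1 \<in> C2 \<and> e1 \<notin> C1"
    then obtain e1 where "e1 \<in> C2" "e1 \<notin> C1" by blast
    then show False using B_core[OF fF h inj c2 s2 c1 s1 _ _ V2 V1] by blast
  qed
qed


definition oth :: "edge \<Rightarrow> nat \<Rightarrow> nat" where
  "oth e v = (if fst e = v then fst (snd e) else fst e)"

lemma ends_oth: "v \<in> ends e \<Longrightarrow> ends e = {v, oth e v}"
  by (auto simp: ends_def oth_def)

lemma loop_oth: "v \<in> ends e \<Longrightarrow> is_loop e \<longleftrightarrow> oth e v = v"
  by (auto simp: ends_def oth_def is_loop_def)

lemma func_cycle:
  assumes fG: "finite G" and fV: "finite V" and Vne: "V \<noteq> {}"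
    and h: "\<forall>e\<in>G. h e \<in> ends e" and en: "\<forall>e\<in>G. ends e \<subseteq> V" and bij: "bij_betw h G V"
  shows "\<exists>C. C \<subseteq> G \<and> is_cycle C"
proof -
  define out where "out = the_inv_into G h"
  have out: "out v \<in> G" "h (out v) = v" if "v \<in> V" for v
    using bij that unfolding out_def
    by (auto simp: bij_betw_def the_inv_into_into f_the_inv_into_f)
  have vout: "v \<in> ends (out v)" if "v \<in> V" for v using h out[OF that] by metis
  define \<phi> where "\<phi> v = oth (out v) v" for v
  have eo: "ends (out v) = {v, \<phi> v}" if "v \<in> V" for v
    unfolding \<phi>_def by (rule ends_oth[OF vout[OF that]])
  have \<phi>V: "\<phi> v \<in> V" if "v \<in> V" for v using eo[OF that] en out[OF that] by auto
  have lo: "is_loop (out v) \<longleftrightarrow> \<phi> v = v" if "v \<in> V" for v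
    unfolding \<phi>_def by (rule loop_oth[OF vout[OF that]])
  define Fam where "Fam Q \<longleftrightarrow> Q \<noteq> {} \<and> Q \<subseteq> V \<and> \<phi> ` Q \<subseteq> Q" for Q
  have "Fam V" using Vne \<phi>V by (auto simp: Fam_def)
  then obtain Q where Q: "Fam Q" and Qmin: "\<And>Q1. Fam Q1 \<Longrightarrow> card Q \<le> card Q1"
    using ex_has_least_nat[of Fam V card] by blast
  have OV: "Q \<subseteq> V" and One: "Q \<noteq> {}" and Ocl: "\<phi> ` Q \<subseteq> Q" using Q by (auto simp: Fam_def)
  have fO: "finite Q" using OV fV finite_subset by blast
  have "Fam (\<phi> ` Q)" using Q by (auto simp: Fam_def)
  then have "card Q \<le> card (\<phi> ` Q)" by (rule Qmin)
  moreover have "card (\<phi> ` Q) \<le> card Q" by (rule card_mono[OF fO Ocl])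
  ultimately have phiO: "\<phi> ` Q = Q" by (intro card_subset_eq[OF fO Ocl]) linarith
  have injphi: "inj_on \<phi> Q" by (rule eq_card_imp_inj_on[OF fO]) (simp only: phiO)
  have orb: "\<exists>t. w = (\<phi> ^^ t) v" if v: "v \<in> Q" and w: "w \<in> Q" for v w
  proof -
    define Orb where "Orb = {(\<phi> ^^ t) v | t. True}"
    have sub: "(\<phi> ^^ t) v \<in> Q" for t
      by (induction t) (use v Ocl in auto)
    have "Fam Orb" unfolding Fam_def Orb_def
    proof (intro conjI)
      show "{(\<phi> ^^ t) v |t. True} \<noteq> {}" by blast
      show "{(\<phi> ^^ t) v |t. True} \<subseteq> V" using sub OV by blast
      show "\<phi> ` {(\<phi> ^^ t) v |t. True} \<subseteq> {(\<phi> ^^ t) v |t. True}"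
      proof
        fix u assume "u \<in> \<phi> ` {(\<phi> ^^ t) v |t. True}"
        then obtain t where "u = \<phi> ((\<phi> ^^ t) v)" by blast
        then have "u = (\<phi> ^^ Suc t) v" by simp
        then show "u \<in> {(\<phi> ^^ t) v |t. True}" by blast
      qed
    qed
    then have "card Q \<le> card Orb" by (rule Qmin)
    moreover have "Orb \<subseteq> Q" using sub by (auto simp: Orb_def)
    ultimately have "Orb = Q" using card_subset_eq[OF fO] by (metis card_mono fO le_antisym)
    then show ?thesis using w by (auto simp: Orb_def)
  qed
  define C where "C = out ` Q"
  have CG: "C \<subseteq> G" using out OV by (auto simp: C_def)
  have injout: "inj_on out Q"
    by (rule inj_onI) (metis OV out(2) subsetD)
  have fC: "finite C" using fO by (simp add: C_def)
  have vC: "verts C = Q"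
  proof
    show "verts C \<subseteq> Q"
    proof
      fix x assume "x \<in> verts C"
      then obtain a where a: "a \<in> Q" "x \<in> ends (out a)" by (auto simp: verts_def C_def)
      then have "x \<in> {a, \<phi> a}" using eo[of a] OV by auto
      then show "x \<in> Q" using a Ocl by auto
    qed
    show "Q \<subseteq> verts C" using vout OV by (force simp: verts_def C_def)
  qed
  have step: "reach C v (\<phi> v)" if "v \<in> Q" for v
  proof -
    have "out v \<in> C" using that by (simp add: C_def)
    moreover have "v \<in> ends (out v)" "\<phi> v \<in> ends (out v)" using eo OV that by auto
    ultimately show ?thesis by (rule reach_edge)
  qed
  have iter: "reach C v ((\<phi> ^^ t) v)" if "v \<in> Q" for v t
  proof (induction t)
    case 0 then show ?case by (simp add: reach_refl)
  next
    case (Suc t)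
    have "(\<phi> ^^ t) v \<in> Q" by (induction t) (use that Ocl in auto)
    then show ?case using Suc reach_trans step by fastforce
  qed
  have conn: "reach C x y" if "x \<in> verts C" "y \<in> verts C" for x y
    using orb[of x y] iter[of x] that vC by auto
  have deg2: "deg C v = 2" if vv: "v \<in> verts C" for v
  proof -
    have v: "v \<in> Q" using vv vC by simp
    obtain u1 where u1: "u1 \<in> Q" "\<phi> u1 = v" using v phiO by (metis imageE)
    have wto: "wt (out u) v = (if v = u \<or> v = \<phi> u then (if \<phi> u = u then 2 else 1) else 0)"
      if "u \<in> Q" for u
      using eo[of u] lo[of u] OV that by (auto simp: wt_def)
    have "deg C v = (\<Sum>f\<in>C. wt f v)" by (rule deg_sum[OF fC])
    also have "\<dots> = (\<Sum>u\<in>Q. wt (out u) v)" unfolding C_def by (simp add: sum.reindex[OF injout])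
    also have "\<dots> = (\<Sum>u\<in>{v, u1}. wt (out u) v)"
    proof (rule sum.mono_neutral_right[OF fO])
      show "{v, u1} \<subseteq> Q" using v u1 by auto
      show "\<forall>i\<in>Q - {v, u1}. wt (out i) v = 0"
      proof
        fix i assume i: "i \<in> Q - {v, u1}"
        then have "\<phi> i \<noteq> v" using injphi u1 by (metis DiffD1 DiffD2 inj_onD insertCI)
        then show "wt (out i) v = 0" using wto[of i] i by auto
      qed
    qed
    also have "\<dots> = 2"
    proof (cases "\<phi> v = v")
      case True
      then have "u1 = v" using injphi u1 v by (metis inj_onD)
      then show ?thesis using wto[OF v] True by simp
    next
      case False
      then have ne: "u1 \<noteq> v" using u1 by auto
      have "\<phi> u1 \<noteq> u1" using u1 ne by simp
      then show ?thesis using wto[OF v] wto[OF u1(1)] False ne u1 by simp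
    qed
    finally show ?thesis .
  qed
  have "C \<noteq> {}" using One by (simp add: C_def)
  then have "is_cycle C" using fC conn deg2 by (auto simp: is_cycle_def)
  then show ?thesis using CG by blast
qed


lemma verts_Un: "verts (A \<union> B) = verts A \<union> verts B" by (auto simp: verts_def)

lemma verts_ind: "verts (ind G V) \<subseteq> V" by (auto simp: verts_def ind_def)

lemma ends_ne: "ends e \<noteq> {}" by (simp add: ends_def)

lemma verts_ne: "C \<noteq> {} \<Longrightarrow> verts C \<noteq> {}" using ends_ne by (auto simp: verts_def)

lemma verts_mono: "A \<subseteq> B \<Longrightarrow> verts A \<subseteq> verts B" by (auto simp: verts_def)

lemma bicycle_sparse1:
  assumes bi: "bicycle_indep n k F"
  shows "\<forall>V'\<subseteq>{0..<n}. card (ind F V') \<le> card V'"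
proof (rule ccontr)
  assume "\<not> ?thesis"
  then obtain V' where V': "V' \<subseteq> {0..<n}" "card V' < card (ind F V')" by (auto simp: not_le)
  have FK: "F \<subseteq> Kgraph n k" using bi by (simp add: bicycle_indep_def)
  have fF: "finite F" using FK finite_Kgraph finite_subset by blast
  define D where "D H \<longleftrightarrow> H \<subseteq> F \<and> card (verts H) < card H" for H
  have "D (ind F V')"
  proof -
    have "finite V'" using V' finite_subset by blast
    then have "card (verts (ind F V')) \<le> card V'" using verts_ind card_mono by blast
    then show ?thesis using V' by (auto simp: D_def ind_def)
  qed
  then obtain H where DH: "D H" and Hmin: "\<And>H'. D H' \<Longrightarrow> card H \<le> card H'"
    using ex_has_least_nat[of D _ card] by blast
  have HF: "H \<subseteq> F" and Hc: "card (verts H) < card H" using DH by (auto simp: D_def)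
  have fH: "finite H" using HF fF finite_subset by blast
  have min: "card H' \<le> card (verts H')" if "H' \<subseteq> H" "H' \<noteq> H" for H'
  proof (rule ccontr)
    assume "\<not> ?thesis"
    then have "D H'" using that HF by (auto simp: D_def)
    then have "card H \<le> card H'" by (rule Hmin)
    moreover have "card H' < card H" using that fH by (simp add: psubset_card_mono)
    ultimately show False by simp
  qed
  define VH where "VH = verts H"
  have fVH: "finite VH" using fH by (simp add: VH_def finite_verts)
  have Hne: "H \<noteq> {}" using Hc by auto
  have conn: "reach H x y" if x: "x \<in> VH" and y: "y \<in> VH" for x y
  proof -
    define K where "K = {z. reach H x z}"
    define A where "A = ind H K"
    define B where "B = H - A"
    have clo: "ends f \<subseteq> K" if "f \<in> H" "z \<in> ends f" "z \<in> K" for f z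
      using comp_closed[OF that(1,2)] that(3) by (simp add: K_def)
    have "B = {}"
    proof (rule ccontr)
      assume Bne: "B \<noteq> {}"
      obtain f where f: "f \<in> H" "x \<in> ends f" using x by (auto simp: VH_def verts_def)
      then have "f \<in> A" using clo[OF f] by (auto simp: A_def ind_def K_def reach_refl)
      then have Ane: "A \<noteq> {}" by blast
      have AH: "A \<subseteq> H" "A \<noteq> H" using Bne by (auto simp: A_def B_def ind_def)
      have BH: "B \<subseteq> H" "B \<noteq> H" using Ane by (auto simp: A_def B_def ind_def)
      have cA: "card A \<le> card (verts A)" by (rule min[OF AH])
      have cB: "card B \<le> card (verts B)" by (rule min[OF BH])
      have dis: "verts A \<inter> verts B = {}"
      proof -
        have "verts A \<subseteq> K" by (simp add: A_def verts_ind)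
        moreover have "verts B \<inter> K = {}"
        proof (rule ccontr)
          assume "verts B \<inter> K \<noteq> {}"
          then obtain g z where "g \<in> B" "z \<in> ends g" "z \<in> K" by (auto simp: verts_def)
          then show False using clo[of g z] by (auto simp: A_def B_def ind_def)
        qed
        ultimately show ?thesis by blast
      qed
      have HAB: "H = A \<union> B" "A \<inter> B = {}" using AH by (auto simp: B_def)
      have fA: "finite A" "finite B" using fH AH BH finite_subset by auto
      have "card (verts H) = card (verts A) + card (verts B)"
        using HAB(1) dis fA by (simp add: verts_Un card_Un_disjoint finite_verts)
      moreover have "card H = card A + card B" using HAB fA by (simp add: card_Un_disjoint)
      ultimately show False using cA cB Hc by linarith
    qed
    then have "H \<subseteq> ind H K" by (auto simp: A_def B_def)
    moreover have "ind H K \<subseteq> H" by (auto simp: ind_def)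
    ultimately have "ind H K = H" by (rule antisym[rotated])
    then have "VH \<subseteq> K" using verts_ind[of H K] by (simp add: VH_def)
    then show ?thesis using y by (auto simp: K_def)
  qed
  have cyc: "\<exists>C. C \<subseteq> H - {e} \<and> is_cycle C" if e: "e \<in> H" for e
  proof -
    define G where "G = H - {e}"
    have fG: "finite G" using fH by (simp add: G_def)
    have GW: "\<forall>f\<in>G. ends f \<subseteq> VH" by (auto simp: G_def VH_def verts_def)
    have cond: "\<forall>V\<subseteq>VH. card (ind G V) \<le> sum (\<lambda>_. 1) V"
    proof (intro allI impI)
      fix V assume V: "V \<subseteq> VH"
      have fV: "finite V" using V fVH finite_subset by blast
      have "ind G V \<subseteq> H" "ind G V \<noteq> H" using e by (auto simp: G_def ind_def)
      then have "card (ind G V) \<le> card (verts (ind G V))" by (rule min)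
      also have "\<dots> \<le> card V" using verts_ind fV card_mono by blast
      finally show "card (ind G V) \<le> sum (\<lambda>_. 1) V" by simp
    qed
    obtain h where h: "\<forall>f\<in>G. h f \<in> ends f" and load: "\<forall>v\<in>VH. card {f\<in>G. h f = v} \<le> 1"
      using orient[OF fG fVH GW cond] by blast
    have hV: "h ` G \<subseteq> VH" using h GW by auto
    have inj: "inj_on h G"
    proof (rule inj_onI)
      fix f1 f2 assume f: "f1 \<in> G" "f2 \<in> G" "h f1 = h f2"
      then have v: "h f1 \<in> VH" using hV by auto
      have "finite {f\<in>G. h f = h f1}" using fG by simp
      moreover have "card {f\<in>G. h f = h f1} \<le> Suc 0" using load v by auto
      ultimately have "\<forall>a\<in>{f\<in>G. h f = h f1}. \<forall>b\<in>{f\<in>G. h f = h f1}. a = b"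
        using card_le_Suc0_iff_eq by blast
      moreover have "f1 \<in> {f\<in>G. h f = h f1}" "f2 \<in> {f\<in>G. h f = h f1}" using f by auto
      ultimately show "f1 = f2" by blast
    qed
    have "card G = card H - 1" using e fH by (simp add: G_def)
    then have "card VH \<le> card G" using Hc by (simp add: VH_def)
    moreover have "card (h ` G) = card G" using inj by (simp add: card_image)
    moreover have "card (h ` G) \<le> card VH" using hV fVH card_mono by blast
    ultimately have "h ` G = VH" using hV fVH by (metis card_subset_eq le_antisym)
    then have bij: "bij_betw h G VH" using inj by (simp add: bij_betw_def)
    have "VH \<noteq> {}" using Hne by (simp add: VH_def verts_ne)
    then show ?thesis using func_cycle[OF fG fVH _ h GW bij] by (simp add: G_def)
  qed
  obtain e0 where e0: "e0 \<in> H" using Hne by blast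
  obtain C0 where C0: "C0 \<subseteq> H - {e0}" "is_cycle C0" using cyc[OF e0] by blast
  obtain e1 where e1: "e1 \<in> C0" using cycle_props(1)[OF C0(2)] by blast
  have e1H: "e1 \<in> H" using e1 C0 by auto
  obtain C1 where C1: "C1 \<subseteq> H - {e1}" "is_cycle C1" using cyc[OF e1H] by blast
  have ne: "C0 \<noteq> C1" using e1 C1 by auto
  obtain x where x: "x \<in> verts C0" using verts_ne[OF cycle_props(1)[OF C0(2)]] by blast
  obtain y where y: "y \<in> verts C1" using verts_ne[OF cycle_props(1)[OF C1(2)]] by blast
  have "x \<in> VH" "y \<in> VH" using x y C0 C1 verts_mono[of C0 H] verts_mono[of C1 H]
    by (auto simp: VH_def)
  then have "reach F x y" using conn reach_mono[OF HF] by blast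
  moreover have "C0 \<subseteq> F" "C1 \<subseteq> F" using C0 C1 HF by auto
  ultimately show False using bi C0(2) C1(2) ne x y unfolding bicycle_indep_def by blast
qed


lemma sparse_ind: "sparse n k G \<longleftrightarrow> (\<forall>V'\<subseteq>{0..<n}. card (ind G V') \<le> k * card V')"
  by (simp add: sparse_def ind_def)

lemma Kgraph_ends: "e \<in> Kgraph n k \<Longrightarrow> ends e \<subseteq> {0..<n}"
  by (auto simp: Kgraph_def ends_def)

lemma union_iff:
  "union_indep k (bicycle_indep n k) X \<longleftrightarrow> X \<subseteq> Kgraph n k \<and> sparse n k X"
proof
  assume "union_indep k (bicycle_indep n k) X"
  then obtain f where f: "\<forall>i<k. bicycle_indep n k (f i)" and X: "X = (\<Union>i<k. f i)"
    by (auto simp: union_indep_def)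
  have sub: "X \<subseteq> Kgraph n k" using f X by (auto simp: bicycle_indep_def)
  have "\<forall>V'\<subseteq>{0..<n}. card (ind X V') \<le> k * card V'"
  proof (intro allI impI)
    fix V' assume V': "V' \<subseteq> {0..<n}"
    have "ind X V' = (\<Union>i<k. ind (f i) V')" by (auto simp: X ind_def)
    then have "card (ind X V') \<le> (\<Sum>i<k. card (ind (f i) V'))" by (simp add: card_UN_le)
    also have "\<dots> \<le> (\<Sum>i<k. card V')"
      by (rule sum_mono) (use f bicycle_sparse1 V' in blast)
    also have "\<dots> = k * card V'" by simp
    finally show "card (ind X V') \<le> k * card V'" .
  qed
  then show "X \<subseteq> Kgraph n k \<and> sparse n k X" using sub by (simp add: sparse_ind)
next
  assume a: "X \<subseteq> Kgraph n k \<and> sparse n k X"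
  have fX: "finite X" using a finite_Kgraph finite_subset by blast
  have W: "\<forall>e\<in>X. ends e \<subseteq> {0..<n}" using a Kgraph_ends by blast
  have cond: "\<forall>V\<subseteq>{0..<n}. card (ind X V) \<le> sum (\<lambda>_. k) V"
    using a by (simp add: sparse_ind mult.commute)
  obtain h where h: "\<forall>e\<in>X. h e \<in> ends e" and load: "\<forall>v\<in>{0..<n}. card {e\<in>X. h e = v} \<le> k"
    using orient[OF fX _ W cond] by blast
  have load': "card {e\<in>X. h e = v} \<le> k" for v
  proof (cases "v \<in> {0..<n}")
    case True then show ?thesis using load by blast
  next
    case False
    then have "{e\<in>X. h e = v} = {}" using h W by blast
    then show ?thesis by (metis card.empty le0)
  qed
  have "\<forall>v. \<exists>g. g ` {e\<in>X. h e = v} \<subseteq> {..<k} \<and> inj_on g {e\<in>X. h e = v}"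
  proof
    fix v
    show "\<exists>g. g ` {e\<in>X. h e = v} \<subseteq> {..<k} \<and> inj_on g {e\<in>X. h e = v}"
      by (rule card_le_inj) (use fX load'[of v] in auto)
  qed
  then have "\<exists>g. \<forall>v. g v ` {e\<in>X. h e = v} \<subseteq> {..<k} \<and> inj_on (g v) {e\<in>X. h e = v}"
    by (rule choice)
  then obtain g where g0: "\<forall>v. g v ` {e\<in>X. h e = v} \<subseteq> {..<k} \<and> inj_on (g v) {e\<in>X. h e = v}"
    by blast
  have g: "\<And>v. g v ` {e\<in>X. h e = v} \<subseteq> {..<k}" "\<And>v. inj_on (g v) {e\<in>X. h e = v}"
    using g0 by blast+
  define f where "f i = {e\<in>X. g (h e) e = i}" for i
  have "X = (\<Union>i<k. f i)"
  proof
    show "X \<subseteq> (\<Union>i<k. f i)"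
    proof
      fix e assume e: "e \<in> X"
      then have "g (h e) e < k" using g(1)[of "h e"] by auto
      then show "e \<in> (\<Union>i<k. f i)" using e by (auto simp: f_def)
    qed
    show "(\<Union>i<k. f i) \<subseteq> X" by (auto simp: f_def)
  qed
  moreover have "\<forall>i<k. bicycle_indep n k (f i)"
  proof (intro allI impI)
    fix i
    have "f i \<subseteq> Kgraph n k" using a by (auto simp: f_def)
    moreover have "\<forall>e\<in>f i. h e \<in> ends e" using h by (auto simp: f_def)
    moreover have "inj_on h (f i)"
    proof (rule inj_onI)
      fix e1 e2 assume e: "e1 \<in> f i" "e2 \<in> f i" "h e1 = h e2"
      then have "e1 \<in> {e\<in>X. h e = h e1}" "e2 \<in> {e\<in>X. h e = h e1}" by (auto simp: f_def)
      moreover have "g (h e1) e1 = g (h e1) e2" using e by (auto simp: f_def)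
      ultimately show "e1 = e2" using g(2)[of "h e1"] by (auto dest: inj_onD)
    qed
    ultimately show "bicycle_indep n k (f i)" by (rule inj_bicycle)
  qed
  ultimately show "union_indep k (bicycle_indep n k) X" by (auto simp: union_indep_def)
qed


definition SP :: "nat \<Rightarrow> nat \<Rightarrow> edge set \<Rightarrow> bool" where
  "SP n k X \<longleftrightarrow> X \<subseteq> Kgraph n k \<and> (\<forall>V'\<subseteq>{0..<n}. card (ind X V') \<le> k * card V')"

lemma exchange:
  assumes SX: "SP n k X" and SY: "SP n k Y" and lt: "card X < card Y"
  shows "\<exists>e\<in>Y - X. SP n k (insert e X)"
proof (rule ccontr)
  assume "\<not> ?thesis"
  then have bad: "\<forall>e\<in>Y - X. \<not> SP n k (insert e X)" by blast
  have fX: "finite X" "finite Y" using SX SY finite_Kgraph finite_subset by (auto simp: SP_def)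
  define tight where "tight V \<longleftrightarrow> V \<subseteq> {0..<n} \<and> card (ind X V) = k * card V" for V
  have spX: "card (ind X V) \<le> k * card V" if "V \<subseteq> {0..<n}" for V using SX that by (simp add: SP_def)
  have spY: "card (ind Y V) \<le> k * card V" if "V \<subseteq> {0..<n}" for V using SY that by (simp add: SP_def)
  have ex: "\<exists>V. tight V \<and> ends e \<subseteq> V" if e: "e \<in> Y - X" for e
  proof -
    have "insert e X \<subseteq> Kgraph n k" using SX SY e by (auto simp: SP_def)
    then obtain V where V: "V \<subseteq> {0..<n}" "\<not> card (ind (insert e X) V) \<le> k * card V"
      using bad e by (auto simp: SP_def)
    have eV: "ends e \<subseteq> V"
    proof (rule ccontr)
      assume "\<not> ends e \<subseteq> V"
      then have "ind (insert e X) V = ind X V" by (auto simp: ind_def)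
      then show False using V spX by simp
    qed
    then have "ind (insert e X) V = insert e (ind X V)" by (auto simp: ind_def)
    moreover have "e \<notin> ind X V" using e by (simp add: ind_def)
    moreover have "finite (ind X V)" using fX by (simp add: ind_def)
    ultimately have "card (ind (insert e X) V) = Suc (card (ind X V))" by simp
    then have "tight V" using V spX[OF V(1)] by (simp add: tight_def)
    then show ?thesis using eV by blast
  qed
  have un: "tight (V1 \<union> V2)" if t: "tight V1" "tight V2" for V1 V2
  proof -
    have f: "finite V1" "finite V2" using t finite_subset by (auto simp: tight_def)
    have "card (ind X V1) + card (ind X V2) \<le> card (ind X (V1 \<union> V2)) + card (ind X (V1 \<inter> V2))"
      by (rule ind_mono_card[OF fX(1)])
    moreover have "card (ind X (V1 \<inter> V2)) \<le> k * card (V1 \<inter> V2)" using t by (intro spX) (auto simp: tight_def)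
    moreover have "card (ind X (V1 \<union> V2)) \<le> k * card (V1 \<union> V2)" using t by (intro spX) (auto simp: tight_def)
    moreover have "card (V1 \<union> V2) + card (V1 \<inter> V2) = card V1 + card V2"
      using f by (simp add: card_Un_Int[symmetric])
    then have "k * card (V1 \<union> V2) + k * card (V1 \<inter> V2) = k * card V1 + k * card V2"
      by (metis add_mult_distrib2)
    ultimately show ?thesis using t by (auto simp: tight_def)
  qed
  have "\<forall>e. \<exists>V. e \<in> Y - X \<longrightarrow> tight V \<and> ends e \<subseteq> V" using ex by blast
  then have "\<exists>Vf. \<forall>e. e \<in> Y - X \<longrightarrow> tight (Vf e) \<and> ends e \<subseteq> Vf e" by (rule choice)
  then obtain Vf where Vf: "\<forall>e. e \<in> Y - X \<longrightarrow> tight (Vf e) \<and> ends e \<subseteq> Vf e"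
    by blast
  have ne: "Y - X \<noteq> {}" using lt fX card_mono by (metis Diff_eq_empty_iff not_le)
  have tU: "A \<noteq> {} \<longrightarrow> A \<subseteq> Y - X \<longrightarrow> tight (\<Union>e\<in>A. Vf e)" if "finite A" for A
    using that
  proof (induction A rule: finite_induct)
    case empty then show ?case by simp
  next
    case (insert a A)
    show ?case
    proof (intro impI)
      assume "insert a A \<subseteq> Y - X"
      then have aYX: "a \<in> Y - X" and A: "A \<subseteq> Y - X" by auto
      have a: "tight (Vf a)" using Vf aYX by blast
      show "tight (\<Union>e\<in>insert a A. Vf e)"
      proof (cases "A = {}")
        case True then show ?thesis using a by simp
      next
        case False
        then have "tight (\<Union>e\<in>A. Vf e)" using insert.IH A by blast
        then show ?thesis using un[OF a] by simp
      qed
    qed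
  qed
  define T where "T = (\<Union>e\<in>Y - X. Vf e)"
  have tT: "tight T" using tU[of "Y - X"] ne fX by (simp add: T_def)
  have YX: "Y - X \<subseteq> ind Y T"
  proof
    fix e assume e: "e \<in> Y - X"
    then have "ends e \<subseteq> Vf e" using Vf by blast
    moreover have "Vf e \<subseteq> T" using e by (auto simp: T_def)
    ultimately show "e \<in> ind Y T" using e by (auto simp: ind_def)
  qed
  have c1: "card (ind Y T) \<le> card (ind X T)" using tT spY by (simp add: tight_def)
  have sub2: "Y - ind Y T \<subseteq> X - ind X T" using YX by (auto simp: ind_def)
  have c2: "card (Y - ind Y T) \<le> card (X - ind X T)" using sub2 fX by (simp add: card_mono)
  have s: "ind Y T \<subseteq> Y" "ind X T \<subseteq> X" by (auto simp: ind_def)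
  have fi: "finite (ind Y T)" "finite (ind X T)" using fX s finite_subset by auto
  have "card (Y - ind Y T) = card Y - card (ind Y T)" by (rule card_Diff_subset[OF fi(1) s(1)])
  moreover have "card (X - ind X T) = card X - card (ind X T)" by (rule card_Diff_subset[OF fi(2) s(2)])
  moreover have "card (ind Y T) \<le> card Y" by (rule card_mono[OF fX(2) s(1)])
  moreover have "card (ind X T) \<le> card X" by (rule card_mono[OF fX(1) s(2)])
  ultimately show False using c1 c2 lt by linarith
qed


lemma trunc_iff: "trunc_indep r (union_indep k (bicycle_indep n k)) X \<longleftrightarrow> SP n k X \<and> card X \<le> r"
  by (simp add: trunc_indep_def union_iff SP_def sparse_ind)

lemma SP_sub: "SP n k Y \<Longrightarrow> X \<subseteq> Y \<Longrightarrow> SP n k X"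
proof -
  assume a: "SP n k Y" "X \<subseteq> Y"
  have "Y \<subseteq> Kgraph n k" using a(1) by (simp add: SP_def)
  then have fY: "finite Y" using finite_Kgraph[of n k] finite_subset by blast
  have "card (ind X V) \<le> card (ind Y V)" for V
    by (rule card_mono) (use fY a(2) in \<open>auto simp: ind_def\<close>)
  then have "\<forall>V'\<subseteq>{0..<n}. card (ind X V') \<le> k * card V'"
    using a(1) unfolding SP_def by (meson le_trans)
  then show ?thesis using a \<open>Y \<subseteq> Kgraph n k\<close> by (auto simp: SP_def)
qed

definition L0 :: "nat \<Rightarrow> nat \<Rightarrow> edge set" where
  "L0 n k = (\<lambda>(v, i). (v, v, i)) ` ({..<n} \<times> {..<k})"

lemma loops_SP:
  shows "SP n k (L0 n k)" "card (L0 n k) = n * k"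
proof -
  have inj: "inj_on (\<lambda>(v, i). (v, v, i)) A" for A :: "(nat \<times> nat) set"
    by (auto simp: inj_on_def)
  show "card (L0 n k) = n * k" unfolding L0_def by (simp add: card_image[OF inj] card_cartesian_product)
  have "L0 n k \<subseteq> Kgraph n k" by (auto simp: L0_def Kgraph_def)
  moreover have "card (ind (L0 n k) V) \<le> k * card V" if V: "V \<subseteq> {0..<n}" for V
  proof -
    have "ind (L0 n k) V \<subseteq> (\<lambda>(v, i). (v, v, i)) ` (V \<times> {..<k})" by (auto simp: L0_def ind_def ends_def)
    then have "card (ind (L0 n k) V) \<le> card ((\<lambda>(v, i). (v, v, i)) ` (V \<times> {..<k}))"
    proof (intro card_mono)
      have "finite V" using V finite_subset by blast
      then show "finite ((\<lambda>(v, i). (v, v, i)) ` (V \<times> {..<k}))" by simp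
    qed
    also have "\<dots> = card V * k" by (simp add: card_image[OF inj] card_cartesian_product)
    finally show ?thesis by (simp add: mult.commute)
  qed
  ultimately show "SP n k (L0 n k)" by (simp add: SP_def)
qed

theorem corollary2:
  fixes n k l :: nat
  assumes "k \<ge> 1" and "l \<le> 2 * k - 1" and "l \<le> k * n"
  shows "\<exists>r. matroid (Kgraph n k) (trunc_indep r (union_indep k (bicycle_indep n k)))
            \<and> Nfam n k l = bases (trunc_indep r (union_indep k (bicycle_indep n k)))"
proof (intro exI conjI)
  define r where "r = k * n - l"
  define I where "I = trunc_indep r (union_indep k (bicycle_indep n k))"
  have I: "I X \<longleftrightarrow> SP n k X \<and> card X \<le> r" for X by (simp add: I_def trunc_iff)
  have fin: "finite X" if "SP n k X" for X
  proof -
    have "X \<subseteq> Kgraph n k" using that by (simp add: SP_def)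
    then show ?thesis using finite_Kgraph[of n k] finite_subset by blast
  qed
  show "matroid (Kgraph n k) (trunc_indep r (union_indep k (bicycle_indep n k)))"
    unfolding I_def[symmetric] matroid_def
  proof (intro conjI allI impI)
    show "finite (Kgraph n k)" by (rule finite_Kgraph)
    show "X \<subseteq> Kgraph n k" if "I X" for X using that by (simp add: I SP_def)
    show "I {}" by (simp add: I SP_def ind_def)
    show "I X" if "I Y" "X \<subseteq> Y" for X Y
    proof -
      have "SP n k X" using that SP_sub by (auto simp: I)
      moreover have "card X \<le> card Y" using that fin by (intro card_mono) (auto simp: I)
      ultimately show ?thesis using that by (simp add: I)
    qed
    show "\<exists>e\<in>Y - X. I (insert e X)" if xa: "I X" and ya: "I Y" and lt: "card X < card Y" for X Y
    proof -
      have s: "SP n k X" "SP n k Y" using xa ya by (simp_all add: I)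
      obtain e where e: "e \<in> Y - X" "SP n k (insert e X)" using exchange[OF s lt] by blast
      have "card (insert e X) = Suc (card X)" using e fin[OF s(1)] by simp
      moreover have "card Y \<le> r" using ya by (simp add: I)
      ultimately have "I (insert e X)" using e lt by (simp add: I)
      then show ?thesis using e by blast
    qed
  qed
  obtain Y0 where Y0: "SP n k Y0" "card Y0 = r"
  proof -
    have "r \<le> card (L0 n k)" using loops_SP(2) by (simp add: r_def mult.commute)
    then obtain T where "T \<subseteq> L0 n k" "card T = r" by (meson obtain_subset_with_card_n)
    then show ?thesis using that SP_sub loops_SP(1) by blast
  qed
  show "Nfam n k l = bases (trunc_indep r (union_indep k (bicycle_indep n k)))"
    unfolding I_def[symmetric]
  proof
    show "Nfam n k l \<subseteq> bases I"
    proof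
      fix G assume "G \<in> Nfam n k l"
      then have G: "G \<subseteq> Kgraph n k" "int (card G) = int k * int n - int l" "sparse n k G"
        by (auto simp: Nfam_def)
      have "int (k * n - l) = int k * int n - int l" using assms(3) by (simp add: of_nat_diff)
      then have "int (card G) = int r" using G(2) by (simp add: r_def)
      then have cG: "card G = r" by simp
      have IG: "I G" using G cG by (simp add: I SP_def sparse_ind)
      have "B' = G" if "I B'" "G \<subseteq> B'" for B'
      proof -
        have "finite B'" using that fin by (simp add: I)
        moreover have "card B' \<le> card G" using that cG by (simp add: I)
        ultimately show ?thesis using that card_subset_eq by (metis card_mono le_antisym)
      qed
      then show "G \<in> bases I" using IG by (auto simp: bases_def)
    qed
    show "bases I \<subseteq> Nfam n k l"
    proof
      fix B assume "B \<in> bases I"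
      then have IB: "I B" and mx: "\<And>B'. I B' \<Longrightarrow> B \<subseteq> B' \<Longrightarrow> B' = B" by (auto simp: bases_def)
      have cB: "card B = r"
      proof (rule ccontr)
        assume "card B \<noteq> r"
        then have lt: "card B < card Y0" using IB Y0 by (simp add: I)
        obtain e where e: "e \<in> Y0 - B" "SP n k (insert e B)" using exchange[OF _ Y0(1) lt] IB by (auto simp: I)
        have "card (insert e B) = Suc (card B)" using e fin IB by (auto simp: I)
        then have "I (insert e B)" using e lt Y0 by (simp add: I)
        then have "insert e B = B" using mx by blast
        then show False using e by blast
      qed
      have "int (k * n - l) = int k * int n - int l" using assms(3) by (simp add: of_nat_diff)
      then show "B \<in> Nfam n k l" using IB cB
        by (auto simp: I SP_def Nfam_def sparse_ind r_def)
    qed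
  qed
qed


end
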